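(* Let $\|\cdot\|$ be a norm on $\mathbb R^n$. Suppose $\Psi=\delta_C$ for a closed convex set $C\subseteq\mathbb R^n$ that is $p$-uniformly convex with constant $\mu>0$ for some $p\ge2$; $f$ is $q$-uniformly smooth on $C$ with constant $L>0$ for some $q\in(1,2]$; $f^\star:=\min_{x\in C}f(x)$ is finite and $X^\star:=\{x\in C:f(x)=f^\star\}$ is nonempty; and $f$ satisfies the $\gamma$-Hölderian error bound on $C$ with constant $K>0$ for some $\gamma\in[0,1]$. Then $(\mathcal D,\mathrm{gap},\mathrm{subopt})$ satisfies the $(q,r)$ weak growth property with $r=\gamma q/p$ and $M=L(pK/\mu)^{q/p}$.
   Context: Let $f:\mathbb{R}^n\to\mathbb{R}\cup\{\infty\}$ be a closed proper convex function differentiable on $C$, and $\Psi=\delta_C$ the indicator function of $C$ (so $\arg\min_y\{\langle g,y\rangle+\Psi(y)\}=\arg\min_{y\in C}\langle g,y\rangle=\partial\Psi^*(-g)$). $f^*,\Psi^*$ denote conjugates. $D_f(y,x)=f(y)-f(x)-\langle\nabla f(x),y-x\rangle$. $\mathrm{gap}(x,u)=f(x)+\Psi(x)+f^*(u)+\Psi^*(-u)$. $\mathcal{D}(x,s,\theta)=D_f(x+\theta(s-x),x)+\Psi(x+\theta(s-x))-(1-\theta)\Psi(x)-\theta\Psi(s)$. $\mathrm{subopt}(x)=f(x)+\Psi(x)-\min_y\{f(y)+\Psi(y)\}$. $\|\cdot\|^*$ is the dual norm. $(q,r)$ weak growth property: there is a finite $M>0$ such that for all $x\in\mathrm{dom}(\Psi)$,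 $g=\nabla f(x)$, $s\in\partial\Psi^*(-g)$: $\mathcal D(x,s,\theta)\,\mathrm{subopt}(x)^{1-r}\le\frac{M\theta^q}{q}\mathrm{gap}(x,g)$ for all $\theta\in[0,1]$. $f$ is $q$-uniformly smooth on $C$ with constant $L$ if for all $x,y\in C$, $\theta\in[0,1]$: $f(x+\theta(y-x))\ge(1-\theta)f(x)+\theta f(y)-\frac Lq\theta(1-\theta)\|y-x\|^q$. $C$ is $p$-uniformly convex with constant $\mu$ if for all $x,y\in C$, $\theta\in[0,1]$, $\|z\|\le1$: $x+\theta(y-x)+\frac\mu p\theta(1-\theta)\|y-x\|^pz\in C$. $\gamma$-Hölderian error bound on $C$ with constant $K$: for all $x\in C$, $\min_{y\in X^\star}\|x-y\|\le K(f(x)-f^\star)^\gamma$. *)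

theory Defs
  imports "HOL-Analysis.Analysis"
begin

definition is_norm :: "(real^'n \<Rightarrow> real) \<Rightarrow> bool" where
  "is_norm N \<longleftrightarrow> (\<forall>x. 0 \<le> N x) \<and> (\<forall>x. N x = 0 \<longleftrightarrow> x = 0)
     \<and> (\<forall>c x. N (c *\<^sub>R x) = \<bar>c\<bar> * N x) \<and> (\<forall>x y. N (x + y) \<le> N x + N y)"

text \<open>Real power with the convention a^0 = 1.\<close>
definition rpow :: "real \<Rightarrow> real \<Rightarrow> real" where
  "rpow a e = (if e = 0 then 1 else a powr e)"

definition closed_proper_convex :: "(real^'n \<Rightarrow> ereal) \<Rightarrow> bool" where
  "closed_proper_convex f \<longleftrightarrow>
     convex {(x, t::real). f x \<le> ereal t} \<and> closed {(x, t::real). f x \<le> ereal t}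
     \<and> (\<forall>x. f x \<noteq> -\<infinity>) \<and> (\<exists>x. f x \<noteq> \<infinity>)"

definition is_grad :: "(real^'n \<Rightarrow> ereal) \<Rightarrow> real^'n \<Rightarrow> real^'n \<Rightarrow> bool" where
  "is_grad f x g \<longleftrightarrow> (\<forall>\<^sub>F y in nhds x. \<bar>f y\<bar> \<noteq> \<infinity>)
     \<and> ((\<lambda>y. real_of_ereal (f y)) has_derivative (\<lambda>h. g \<bullet> h)) (at x)"

definition differentiable_on_set :: "(real^'n \<Rightarrow> ereal) \<Rightarrow> (real^'n) set \<Rightarrow> bool" where
  "differentiable_on_set f C \<longleftrightarrow> (\<forall>x\<in>C. \<exists>g. is_grad f x g)"

definition ind :: "(real^'n) set \<Rightarrow> real^'n \<Rightarrow> ereal" where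
  "ind C x = (if x \<in> C then 0 else \<infinity>)"

definition econj :: "(real^'n \<Rightarrow> ereal) \<Rightarrow> real^'n \<Rightarrow> ereal" where
  "econj f u = (SUP y. ereal (u \<bullet> y) - f y)"

text \<open>Bregman divergence D_f(y,x), with g = grad f(x).\<close>
definition bregman :: "(real^'n \<Rightarrow> ereal) \<Rightarrow> real^'n \<Rightarrow> real^'n \<Rightarrow> real^'n \<Rightarrow> ereal" where
  "bregman f g y x = f y - f x - ereal (g \<bullet> (y - x))"

definition gap :: "(real^'n \<Rightarrow> ereal) \<Rightarrow> (real^'n) set \<Rightarrow> real^'n \<Rightarrow> real^'n \<Rightarrow> ereal" where
  "gap f C x u = f x + ind C x + econj f u + econj (ind C) (- u)"

text \<open>The quantity D(x,s,theta) with Psi = ind C, g = grad f(x).\<close>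
definition Dfun :: "(real^'n \<Rightarrow> ereal) \<Rightarrow> (real^'n) set \<Rightarrow> real^'n \<Rightarrow> real^'n \<Rightarrow> real^'n \<Rightarrow> real \<Rightarrow> ereal" where
  "Dfun f C g x s \<theta> = bregman f g (x + \<theta> *\<^sub>R (s - x)) x + ind C (x + \<theta> *\<^sub>R (s - x))
      - ereal (1 - \<theta>) * ind C x - ereal \<theta> * ind C s"

definition subopt :: "(real^'n \<Rightarrow> ereal) \<Rightarrow> (real^'n) set \<Rightarrow> real^'n \<Rightarrow> ereal" where
  "subopt f C x = f x + ind C x - (INF y. f y + ind C y)"

definition weak_growth :: "(real^'n \<Rightarrow> ereal) \<Rightarrow> (real^'n) set \<Rightarrow> real \<Rightarrow> real \<Rightarrow> real \<Rightarrow> bool" where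
  "weak_growth f C q r M \<longleftrightarrow> 0 < M \<and>
     (\<forall>x\<in>C. \<forall>g. is_grad f x g \<longrightarrow>
        (\<forall>s. (s \<in> C \<and> (\<forall>y\<in>C. g \<bullet> s \<le> g \<bullet> y)) \<longrightarrow>
          (\<forall>\<theta>\<in>{0..1}.
             Dfun f C g x s \<theta> * ereal (rpow (real_of_ereal (subopt f C x)) (1 - r))
               \<le> ereal (M * \<theta> powr q / q) * gap f C x g)))"

definition unif_smooth_on :: "(real^'n \<Rightarrow> real) \<Rightarrow> (real^'n \<Rightarrow> ereal) \<Rightarrow> (real^'n) set \<Rightarrow> real \<Rightarrow> real \<Rightarrow> bool" where
  "unif_smooth_on N f C q L \<longleftrightarrow> (\<forall>x\<in>C. \<forall>y\<in>C. \<forall>\<theta>\<in>{0..1}.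
      ereal (1 - \<theta>) * f x + ereal \<theta> * f y - ereal (L / q * \<theta> * (1 - \<theta>) * N (y - x) powr q)
        \<le> f (x + \<theta> *\<^sub>R (y - x)))"

definition unif_convex_set :: "(real^'n \<Rightarrow> real) \<Rightarrow> (real^'n) set \<Rightarrow> real \<Rightarrow> real \<Rightarrow> bool" where
  "unif_convex_set N C p \<mu> \<longleftrightarrow> (\<forall>x\<in>C. \<forall>y\<in>C. \<forall>\<theta>\<in>{0..1}. \<forall>z. N z \<le> 1 \<longrightarrow>
      x + \<theta> *\<^sub>R (y - x) + (\<mu> / p * \<theta> * (1 - \<theta>) * N (y - x) powr p) *\<^sub>R z \<in> C)"

definition holder_error_bound :: "(real^'n \<Rightarrow> real) \<Rightarrow> (real^'n \<Rightarrow> ereal) \<Rightarrow> (real^'n) set \<Rightarrow> real \<Rightarrow> real \<Rightarrow> real \<Rightarrow> bool" where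
  "holder_error_bound N f C fstar \<gamma> K \<longleftrightarrow> (\<forall>x\<in>C.
      Inf {N (x - y) | y. y \<in> C \<and> f y = ereal fstar} \<le> K * rpow (real_of_ereal (f x) - fstar) \<gamma>)"

end

theory Submission
  imports Defs
begin


lemma grad_finite: "is_grad f x g \<Longrightarrow> f x = ereal (real_of_ereal (f x))"
  unfolding is_grad_def
  by (metis (mono_tags, lifting) eventually_nhds_x_imp_x ereal_real)

lemma line_deriv:
  assumes "is_grad f (x + t *\<^sub>R v) g"
  shows "((\<lambda>\<tau>. real_of_ereal (f (x + \<tau> *\<^sub>R v))) has_real_derivative (g \<bullet> v)) (at t)"
proof -
  have d: "((\<lambda>y. real_of_ereal (f y)) has_derivative (\<lambda>h. g \<bullet> h)) (at (x + t *\<^sub>R v))"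
    using assms unfolding is_grad_def by blast
  have l: "((\<lambda>\<tau>. x + \<tau> *\<^sub>R v) has_derivative (\<lambda>\<tau>. \<tau> *\<^sub>R v)) (at t)"
    by (auto intro!: derivative_eq_intros)
  have "((\<lambda>\<tau>. real_of_ereal (f (x + \<tau> *\<^sub>R v))) has_derivative (\<lambda>\<tau>. g \<bullet> (\<tau> *\<^sub>R v))) (at t)"
    using diff_chain_at[OF l d] by (simp add: o_def)
  then show ?thesis
    unfolding has_field_derivative_def
    by (simp add: mult.commute[of _ "g \<bullet> v"] cong: rev_conj_cong)
qed

lemma deriv_ge:
  fixes \<phi> :: "real \<Rightarrow> real"
  assumes "(\<phi> has_real_derivative D) (at t0)" "e > 0"
    and "\<And>\<tau>. 0 < \<tau> \<Longrightarrow> \<tau> \<le> e \<Longrightarrow> \<tau> * h \<tau> \<le> \<phi> (t0 + \<tau>) - \<phi> t0"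
    and "(h \<longlongrightarrow> c) (at_right 0)"
  shows "c \<le> D"
proof -
  have "((\<lambda>\<tau>. (\<phi> (t0 + \<tau>) - \<phi> t0) / \<tau>) \<longlongrightarrow> D) (at 0)"
    using assms(1) unfolding DERIV_def .
  then have 1: "((\<lambda>\<tau>. (\<phi> (t0 + \<tau>) - \<phi> t0) / \<tau>) \<longlongrightarrow> D) (at_right 0)"
    by (rule tendsto_mono[rotated]) (simp add: at_le)
  have 2: "\<forall>\<^sub>F \<tau> in at_right 0. h \<tau> \<le> (\<phi> (t0 + \<tau>) - \<phi> t0) / \<tau>"
    unfolding eventually_at_right_field
    using assms(2,3) by (intro exI[of _ e]) (auto simp: field_simps)
  show ?thesis by (rule tendsto_le[OF _ 1 assms(4) 2]) simp
qed

lemma deriv_le: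
  fixes \<phi> :: "real \<Rightarrow> real"
  assumes "(\<phi> has_real_derivative D) (at t0)" "e > 0"
    and "\<And>\<tau>. 0 < \<tau> \<Longrightarrow> \<tau> \<le> e \<Longrightarrow> \<phi> (t0 + \<tau>) - \<phi> t0 \<le> \<tau> * h \<tau>"
    and "(h \<longlongrightarrow> c) (at_right 0)"
  shows "D \<le> c"
proof -
  have d: "((\<lambda>t. - \<phi> t) has_real_derivative -D) (at t0)"
    using assms(1) by (rule DERIV_minus)
  have l: "((\<lambda>t. - h t) \<longlongrightarrow> - c) (at_right 0)" using assms(4) by (rule tendsto_minus)
  have "-c \<le> -D"
  proof (rule deriv_ge[OF d assms(2) _ l])
    fix \<tau> :: real assume "0 < \<tau>" "\<tau> \<le> e"
    then show "\<tau> * - h \<tau> \<le> - \<phi> (t0 + \<tau>) - - \<phi> t0" using assms(3)[of \<tau>] by simp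
  qed
  then show ?thesis by simp
qed



lemma cvx_seg:
  assumes f: "closed_proper_convex f" and "f y1 = ereal a1" "f y2 = ereal a2"
    and "0 \<le> l" "l \<le> 1"
  shows "f (y1 + l *\<^sub>R (y2 - y1)) \<le> ereal ((1-l)*a1 + l*a2)"
proof -
  let ?E = "{(x, t::real). f x \<le> ereal t}"
  have cv: "convex ?E" using f unfolding closed_proper_convex_def by blast
  have m1: "(y1, a1) \<in> ?E" "(y2, a2) \<in> ?E" using assms by auto
  have "(1-l) *\<^sub>R (y1, a1) + l *\<^sub>R (y2, a2) \<in> ?E"
    by (rule convexD[OF cv m1]) (use assms in auto)
  moreover have "y1 + l *\<^sub>R (y2 - y1) = (1-l) *\<^sub>R y1 + l *\<^sub>R y2"
    by (simp add: algebra_simps)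
  ultimately show ?thesis by simp
qed

lemma cvx_noninf: "closed_proper_convex f \<Longrightarrow> f x \<noteq> -\<infinity>"
  unfolding closed_proper_convex_def by blast

lemma grad_ineq:
  assumes f: "closed_proper_convex f" and g: "is_grad f x g" and y: "f y = ereal b"
  shows "real_of_ereal (f x) + g \<bullet> (y - x) \<le> b"
proof -
  let ?F = "\<lambda>z. real_of_ereal (f z)"
  have fx: "f x = ereal (?F x)" using grad_finite[OF g] .
  have d: "((\<lambda>\<tau>. ?F (x + \<tau> *\<^sub>R (y - x))) has_real_derivative (g \<bullet> (y - x))) (at 0)"
    using line_deriv[of f x 0 "y - x" g] g by simp
  have "g \<bullet> (y - x) \<le> b - ?F x"
  proof (rule deriv_le[OF d zero_less_one])
    fix \<tau> :: real assume t: "0 < \<tau>" "\<tau> \<le> 1"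
    have le: "f (x + \<tau> *\<^sub>R (y - x)) \<le> ereal ((1-\<tau>)*?F x + \<tau>*b)"
      using cvx_seg[OF f fx y, of \<tau>] t by simp
    moreover have "f (x + \<tau> *\<^sub>R (y - x)) \<noteq> -\<infinity>" using cvx_noninf[OF f] .
    ultimately have "?F (x + \<tau> *\<^sub>R (y - x)) \<le> (1-\<tau>)*?F x + \<tau>*b"
      by (cases "f (x + \<tau> *\<^sub>R (y - x))") auto
    then show "?F (x + (0 + \<tau>) *\<^sub>R (y - x)) - ?F (x + 0 *\<^sub>R (y - x)) \<le> \<tau> * (b - ?F x)"
      by (simp add: algebra_simps)
  qed simp
  then show ?thesis by simp
qed

lemma grad_ineqC:
  assumes f: "closed_proper_convex f" and g: "is_grad f x g" and fd: "differentiable_on_set f C"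
    and "y \<in> C"
  shows "real_of_ereal (f x) + g \<bullet> (y - x) \<le> real_of_ereal (f y)"
proof -
  obtain gy where "is_grad f y gy" using fd assms(4) unfolding differentiable_on_set_def by blast
  from grad_finite[OF this] show ?thesis by (rule grad_ineq[OF f g])
qed

lemma finC: "differentiable_on_set f C \<Longrightarrow> y \<in> C \<Longrightarrow> f y = ereal (real_of_ereal (f y))"
  unfolding differentiable_on_set_def using grad_finite by blast

lemma smooth_breg:
  assumes C: "convex C" and fd: "differentiable_on_set f C" and fsm: "unif_smooth_on N f C q L"
    and x: "x \<in> C" and y: "y \<in> C" and g: "is_grad f x g"
  shows "real_of_ereal (f y) - real_of_ereal (f x) - g \<bullet> (y - x) \<le> L / q * N (y - x) powr q"
proof -
  let ?F = "\<lambda>z. real_of_ereal (f z)"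
  define Nq where "Nq = N (y - x) powr q"
  have d: "((\<lambda>\<tau>. ?F (x + \<tau> *\<^sub>R (y - x))) has_real_derivative (g \<bullet> (y - x))) (at 0)"
    using line_deriv[of f x 0 "y - x" g] g by simp
  have lim: "((\<lambda>\<tau>. ?F y - ?F x - L/q*(1-\<tau>)*Nq) \<longlongrightarrow> ?F y - ?F x - L/q*(1-0)*Nq) (at_right 0)"
    by (intro tendsto_intros)
  have "?F y - ?F x - L/q*(1-0)*Nq \<le> g \<bullet> (y - x)"
  proof (rule deriv_ge[OF d zero_less_one _ lim])
    fix \<tau> :: real assume t: "0 < \<tau>" "\<tau> \<le> 1"
    have inC: "x + \<tau> *\<^sub>R (y - x) \<in> C"
      using convexD_alt[OF C x y, of \<tau>] t by (simp add: algebra_simps)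
    have "ereal (1 - \<tau>) * f x + ereal \<tau> * f y - ereal (L / q * \<tau> * (1 - \<tau>) * Nq)
        \<le> f (x + \<tau> *\<^sub>R (y - x))"
      using fsm x y t unfolding unif_smooth_on_def Nq_def by auto
    moreover obtain a1 where a1: "f x = ereal a1" using finC[OF fd x] by blast
    moreover obtain a2 where a2: "f y = ereal a2" using finC[OF fd y] by blast
    moreover obtain a3 where a3: "f (x + \<tau> *\<^sub>R (y - x)) = ereal a3" using finC[OF fd inC] by blast
    ultimately have "(1 - \<tau>) * a1 + \<tau> * a2 - L / q * \<tau> * (1 - \<tau>) * Nq \<le> a3"
      by simp
    then have "(1 - \<tau>) * ?F x + \<tau> * ?F y - L / q * \<tau> * (1 - \<tau>) * Nq \<le> ?F (x + \<tau> *\<^sub>R (y - x))"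
      using a1 a2 a3 by simp
    then show "\<tau> * (?F y - ?F x - L/q*(1-\<tau>)*Nq) \<le> ?F (x + (0 + \<tau>) *\<^sub>R (y - x)) - ?F (x + 0 *\<^sub>R (y - x))"
      by (simp add: algebra_simps)
  qed
  then show ?thesis unfolding Nq_def by simp
qed



lemma core:
  fixes a G d p q \<gamma> \<mu> K L \<theta> Dr :: real
  assumes a: "a > 0" and aG: "a \<le> G" and d: "d \<ge> 0" and p: "p \<ge> 2" and q: "1 < q" "q \<le> 2"
    and ga: "0 \<le> \<gamma>" "\<gamma> \<le> 1" and mu: "\<mu> > 0" and K: "K > 0" and L: "L > 0"
    and H: "\<mu> / p * d powr p * a \<le> G * (K * a powr \<gamma>)"
    and th: "0 \<le> \<theta>" and Dr: "Dr \<le> L / q * (\<theta> * d) powr q"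
  shows "Dr * a powr (1 - \<gamma> * q / p) \<le> L * (p * K / \<mu>) powr (q / p) * \<theta> powr q / q * G"
proof -
  define R where "R = p * K / \<mu>"
  have R: "R > 0" using p K mu unfolding R_def by auto
  have G: "G > 0" using a aG by simp
  have pp: "p > 0" using p by simp
  have "d powr p * a \<le> R * G * a powr \<gamma>"
    using H pp mu unfolding R_def by (simp add: field_simps)
  also have "a powr \<gamma> = a powr (\<gamma> - 1) * a" using a by (simp add: powr_diff)
  finally have "d powr p * a \<le> (R * G * a powr (\<gamma> - 1)) * a" by (simp add: mult.assoc)
  then have dp: "d powr p \<le> R * G * a powr (\<gamma> - 1)" using a by simp
  have "d powr q = (d powr p) powr (q / p)" using pp by (simp add: powr_powr)
  also have "\<dots> \<le> (R * G * a powr (\<gamma> - 1)) powr (q / p)"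
    by (rule powr_mono2) (use dp pp q in auto)
  also have "\<dots> = R powr (q/p) * G powr (q/p) * a powr ((\<gamma> - 1) * (q / p))"
    using R G a by (simp add: powr_mult powr_powr)
  finally have dq: "d powr q \<le> R powr (q/p) * G powr (q/p) * a powr ((\<gamma> - 1) * (q / p))" .
  define A where "A = a powr (1 - \<gamma> * q / p)"
  have A: "A \<ge> 0" unfolding A_def by simp
  have "Dr * A \<le> (L / q * (\<theta> * d) powr q) * A" using Dr A by (rule mult_right_mono)
  also have "(\<theta> * d) powr q = \<theta> powr q * d powr q" using th d by (simp add: powr_mult)
  also have "L / q * (\<theta> powr q * d powr q) * A \<le> L / q * (\<theta> powr q * (R powr (q/p) * G powr (q/p) * a powr ((\<gamma> - 1) * (q / p)))) * A"
    using dq A L q th by (intro mult_right_mono mult_left_mono) auto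
  also have "a powr ((\<gamma> - 1) * (q / p)) * A = a powr (1 - q / p)"
    unfolding A_def using a pp by (simp add: powr_add[symmetric] field_simps)
  then have "L / q * (\<theta> powr q * (R powr (q/p) * G powr (q/p) * a powr ((\<gamma> - 1) * (q / p)))) * A
      = L / q * \<theta> powr q * R powr (q/p) * G powr (q/p) * a powr (1 - q / p)"
    by (simp add: mult.assoc mult.left_commute)
  also have "\<dots> \<le> L / q * \<theta> powr q * R powr (q/p) * G powr (q/p) * G powr (1 - q / p)"
    using L q th a aG pp p by (intro mult_left_mono powr_mono2) (auto simp: field_simps)
  also have "G powr (q/p) * G powr (1 - q / p) = G" using G by (simp add: powr_add[symmetric])
  then have "L / q * \<theta> powr q * R powr (q/p) * G powr (q/p) * G powr (1 - q / p) = L * R powr (q / p) * \<theta> powr q / q * G"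
    by (simp add: field_simps mult.assoc)
  finally show ?thesis unfolding A_def R_def .
qed



lemma lim_one:
  fixes A B :: real
  assumes "\<And>t. 0 \<le> t \<Longrightarrow> t < 1 \<Longrightarrow> t * B \<le> A"
  shows "B \<le> A"
proof (rule ccontr)
  assume "\<not> B \<le> A"
  then have BA: "A < B" by simp
  have A0: "0 \<le> A" using assms[of 0] by simp
  then have B0: "B > 0" using BA by simp
  define t where "t = (1 + A / B) / 2"
  have "A / B < 1" using BA B0 by simp
  then have t: "0 \<le> t" "t < 1" using A0 B0 unfolding t_def by auto
  have "t * B = (B + A) / 2" unfolding t_def using B0 by (simp add: field_simps)
  also have "\<dots> > A" using BA by simp
  finally show False using assms[OF t] by simp
qed

lemma norm_neg: "is_norm N \<Longrightarrow> N (- z) = N z"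
  unfolding is_norm_def by (metis abs_minus_cancel abs_one mult_cancel_right1 scaleR_minus1_left)

lemma norm_scale: "is_norm N \<Longrightarrow> N (c *\<^sub>R z) = \<bar>c\<bar> * N z"
  unfolding is_norm_def by blast

lemma norm_nonneg': "is_norm N \<Longrightarrow> 0 \<le> N z"
  unfolding is_norm_def by blast

lemma norm_zero': "is_norm N \<Longrightarrow> N z = 0 \<longleftrightarrow> z = 0"
  unfolding is_norm_def by blast

lemma unifconv_bound:
  assumes Cuc: "unif_convex_set N C p \<mu>" and x: "x \<in> C" and s: "s \<in> C"
    and smin: "\<forall>y\<in>C. g \<bullet> s \<le> g \<bullet> y" and w: "N w \<le> 1"
  shows "\<mu> / p * N (s - x) powr p * (- (g \<bullet> w)) \<le> g \<bullet> (x - s)"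
proof (rule lim_one)
  fix t :: real assume t: "0 \<le> t" "t < 1"
  define c where "c = \<mu> / p * N (s - x) powr p"
  have eq: "\<mu> / p * t * (1 - t) * N (s - x) powr p = c * t * (1 - t)" unfolding c_def by simp
  have "x + t *\<^sub>R (s - x) + (\<mu> / p * t * (1 - t) * N (s - x) powr p) *\<^sub>R w \<in> C"
    using Cuc x s t w unfolding unif_convex_set_def by auto
  then have "g \<bullet> s \<le> g \<bullet> (x + t *\<^sub>R (s - x) + (c * t * (1 - t)) *\<^sub>R w)"
    using smin unfolding eq by blast
  then have "g \<bullet> s \<le> g \<bullet> x + t * (g \<bullet> s - g \<bullet> x) + c * t * (1 - t) * (g \<bullet> w)"
    by (simp add: inner_add_right inner_diff_right)
  then have h: "(1 - t) * (t * (c * (- (g \<bullet> w)))) \<le> (1 - t) * (g \<bullet> (x - s))"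
    by (simp add: algebra_simps inner_diff_right)
  show "t * (c * (- (g \<bullet> w))) \<le> g \<bullet> (x - s)"
    using mult_left_le_imp_le[OF h] t by simp
qed



lemma local_lb:
  fixes N :: "real^'n \<Rightarrow> real" and f :: "real^'n \<Rightarrow> ereal" and C :: "(real^'n) set"
  assumes norm: "is_norm N"
    and f: "closed_proper_convex f" and fdiff: "differentiable_on_set f C"
    and C: "convex C" and Cuc: "unif_convex_set N C 2 \<mu>" and fsm: "unif_smooth_on N f C 2 L"
    and fstar_min: "\<forall>x\<in>C. ereal fstar \<le> f x"
    and K: "K > 0" and eb: "holder_error_bound N f C fstar 1 K"
    and w0: "w0 \<in> C" "f w0 = ereal fstar"
    and x: "x \<in> C" and s: "s \<in> C" and t: "0 \<le> \<tau>" "\<tau> \<le> 1"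
    and ypos: "real_of_ereal (f (x + \<tau> *\<^sub>R (s - x))) > fstar"
    and rho: "0 \<le> \<rho>" "\<rho> \<le> \<mu> / 2 * \<tau> * (1 - \<tau>) * N (s - x) powr 2"
  shows "\<rho> / (2 * K) - L / 2 * \<rho>^2 \<le> real_of_ereal (f (x + \<tau> *\<^sub>R (s - x))) - fstar"
proof -
  let ?F = "\<lambda>z. real_of_ereal (f z)"
  define y where "y = x + \<tau> *\<^sub>R (s - x)"
  have yC: "y \<in> C" unfolding y_def
    using convexD_alt[OF C x s, of \<tau>] t by (simp add: algebra_simps)
  define a where "a = ?F y - fstar"
  have a: "a > 0" using ypos unfolding a_def y_def by simp
  obtain gy where gy: "is_grad f y gy" using fdiff yC unfolding differentiable_on_set_def by blast
  define S where "S = {N (y - w) | w. w \<in> C \<and> f w = ereal fstar}"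
  have Sne: "S \<noteq> {}" unfolding S_def using w0 by blast
  have "Inf S \<le> K * rpow (?F y - fstar) 1" using eb yC unfolding holder_error_bound_def S_def by blast
  then have "Inf S \<le> K * a" using a unfolding rpow_def a_def by simp
  also have "\<dots> < 2 * K * a" using K a by simp
  finally obtain e where "e \<in> S" "e < 2 * K * a" using cInf_lessD[OF Sne] by blast
  then obtain w where w: "w \<in> C" "f w = ereal fstar" and e: "e = N (y - w)" "e < 2 * K * a"
    unfolding S_def by blast
  have "y \<noteq> w" using w a unfolding a_def by auto
  then have e0: "e > 0" using norm_zero'[OF norm, of "y - w"] norm_nonneg'[OF norm, of "y - w"] e by simp
  define u where "u = (1 / e) *\<^sub>R (y - w)"
  have Nu: "N u = 1" unfolding u_def using norm_scale[OF norm, of "1/e" "y - w"] e0 e by simp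
  have "?F y + gy \<bullet> (w - y) \<le> ?F w" by (rule grad_ineqC[OF f gy fdiff w(1)])
  then have "a \<le> gy \<bullet> (y - w)" using w unfolding a_def by (simp add: inner_diff_right)
  then have "a / e \<le> gy \<bullet> u" unfolding u_def using e0 by (simp add: divide_right_mono)
  moreover have "1 / (2 * K) \<le> a / e" using e0 e a K by (simp add: field_simps)
  ultimately have gu: "1 / (2 * K) \<le> gy \<bullet> u" by simp
  define rt where "rt = \<mu> / 2 * \<tau> * (1 - \<tau>) * N (s - x) powr 2"
  show ?thesis
  proof (cases "\<rho> = 0")
    case True then show ?thesis using a unfolding a_def y_def by simp
  next
    case False
    then have r0: "\<rho> > 0" using rho by simp
    then have rt0: "rt > 0" using rho unfolding rt_def by simp
    define z where "z = (- (\<rho> / rt)) *\<^sub>R u"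
    have Nz: "N z \<le> 1" unfolding z_def using norm_scale[OF norm, of "- (\<rho> / rt)" u] Nu rt0 rho r0
      by (simp add: rt_def)
    have "x + \<tau> *\<^sub>R (s - x) + (\<mu> / 2 * \<tau> * (1 - \<tau>) * N (s - x) powr 2) *\<^sub>R z \<in> C"
      using Cuc x s t Nz unfolding unif_convex_set_def by auto
    moreover have "(\<mu> / 2 * \<tau> * (1 - \<tau>) * N (s - x) powr 2) *\<^sub>R z = (- \<rho>) *\<^sub>R u"
      unfolding z_def rt_def[symmetric] using rt0 by simp
    ultimately have PC: "y + (- \<rho>) *\<^sub>R u \<in> C" unfolding y_def by simp
    have "?F (y + (- \<rho>) *\<^sub>R u) - ?F y - gy \<bullet> ((y + (- \<rho>) *\<^sub>R u) - y) \<le> L / 2 * N ((y + (- \<rho>) *\<^sub>R u) - y) powr 2"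
      using smooth_breg[OF C fdiff fsm yC PC gy] by simp
    moreover have "N ((y + (- \<rho>) *\<^sub>R u) - y) = \<rho>"
      using norm_scale[OF norm, of "- \<rho>" u] Nu r0 by simp
    moreover have "fstar \<le> ?F (y + (- \<rho>) *\<^sub>R u)"
      using fstar_min PC finC[OF fdiff PC] by (metis ereal_less_eq(3))
    ultimately have "fstar \<le> ?F y - \<rho> * (gy \<bullet> u) + L / 2 * \<rho>^2"
      using r0 by simp
    moreover have "\<rho> * (1 / (2 * K)) \<le> \<rho> * (gy \<bullet> u)" using gu r0 by (intro mult_left_mono) auto
    ultimately show ?thesis unfolding a_def y_def by simp
  qed
qed



lemma edge:
  fixes N :: "real^'n \<Rightarrow> real" and f :: "real^'n \<Rightarrow> ereal" and C :: "(real^'n) set"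
    and \<mu> L K fstar :: real
  assumes norm: "is_norm N"
    and f: "closed_proper_convex f" and fdiff: "differentiable_on_set f C"
    and C: "convex C"
    and mu: "\<mu> > 0" and Cuc: "unif_convex_set N C 2 \<mu>"
    and L: "L > 0" and fsm: "unif_smooth_on N f C 2 L"
    and fstar_min: "\<forall>x\<in>C. ereal fstar \<le> f x"
    and K: "K > 0"
    and eb: "holder_error_bound N f C fstar 1 K"
    and x: "x \<in> C" and fx: "f x = ereal fstar" and g: "is_grad f x g"
    and s: "s \<in> C" and smin: "\<forall>y\<in>C. g \<bullet> s \<le> g \<bullet> y"
    and th: "0 \<le> \<theta>" "\<theta> \<le> 1"
  shows "f (x + \<theta> *\<^sub>R (s - x)) = ereal fstar"
proof -
  let ?F = "\<lambda>z. real_of_ereal (f z)"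
  define v where "v = s - x"
  define d where "d = N v"
  define pt where "pt = (\<lambda>\<tau>::real. x + \<tau> *\<^sub>R v)"
  define \<phi> where "\<phi> = (\<lambda>\<tau>. ?F (pt \<tau>))"
  have ptC: "pt \<tau> \<in> C" if "0 \<le> \<tau>" "\<tau> \<le> 1" for \<tau>
    unfolding pt_def v_def using convexD_alt[OF C x s, of \<tau>] that by (simp add: algebra_simps)
  have fpt: "f (pt \<tau>) = ereal (\<phi> \<tau>)" if "0 \<le> \<tau>" "\<tau> \<le> 1" for \<tau>
    unfolding \<phi>_def using finC[OF fdiff ptC[OF that]] .
  have phige: "fstar \<le> \<phi> \<tau>" if "0 \<le> \<tau>" "\<tau> \<le> 1" for \<tau>
    using fstar_min ptC[OF that] fpt[OF that] by force
  have der: "\<exists>gg. is_grad f (pt \<tau>) gg" if "0 \<le> \<tau>" "\<tau> \<le> 1" for \<tau>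
    using fdiff ptC[OF that] unfolding differentiable_on_set_def by blast
  have phider: "(\<phi> has_real_derivative (gg \<bullet> v)) (at \<tau>)" if "is_grad f (pt \<tau>) gg" for \<tau> gg
    unfolding \<phi>_def pt_def using line_deriv[of f x \<tau> v gg] that unfolding pt_def by simp
  have phi0: "\<phi> 0 = fstar" unfolding \<phi>_def pt_def using fx by simp
  show ?thesis
  proof (cases "d = 0")
    case True
    then have "v = 0" unfolding d_def using norm_zero'[OF norm] by simp
    then show ?thesis using fx unfolding v_def by simp
  next
    case False
    then have d0: "d > 0" unfolding d_def using norm_nonneg'[OF norm, of v] by simp
    define Z where "Z = {\<tau> \<in> {0..1}. \<phi> \<tau> = fstar}"
    have cont: "continuous_on {0..1} \<phi>"
    proof (rule continuous_at_imp_continuous_on, rule ballI)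
      fix \<tau> :: real assume "\<tau> \<in> {0..1}"
      then obtain gg where "is_grad f (pt \<tau>) gg" using der by auto
      then show "isCont \<phi> \<tau>" using phider DERIV_isCont by blast
    qed
    have clZ: "closed Z" unfolding Z_def by (rule continuous_closed_preimage_constant[OF cont]) simp
    have "0 \<in> Z" unfolding Z_def using phi0 by simp
    then have Zne: "Z \<noteq> {}" by blast
    have Zbd: "bdd_above Z" unfolding Z_def by (rule bdd_aboveI[of _ 1]) auto
    define t1 where "t1 = Sup Z"
    have t1Z: "t1 \<in> Z" unfolding t1_def by (rule closed_contains_Sup[OF Zne Zbd clZ])
    then have t1: "0 \<le> t1" "t1 \<le> 1" "\<phi> t1 = fstar" unfolding Z_def by auto
    have zero: "\<phi> \<tau> = fstar" if "0 \<le> \<tau>" "\<tau> \<le> t1" for \<tau>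
    proof (cases "t1 = 0")
      case True then show ?thesis using that phi0 by simp
    next
      case False
      then have t1p: "t1 > 0" using t1 by simp
      define l where "l = \<tau> / t1"
      have l: "0 \<le> l" "l \<le> 1" unfolding l_def using that t1p by auto
      have "f (x + l *\<^sub>R (pt t1 - x)) \<le> ereal ((1-l)*fstar + l*fstar)"
        by (rule cvx_seg[OF f fx _ l]) (use fpt[OF t1(1,2)] t1 in simp)
      moreover have "x + l *\<^sub>R (pt t1 - x) = pt \<tau>" unfolding pt_def l_def using t1p by simp
      ultimately have "\<phi> \<tau> \<le> fstar" using fpt[of \<tau>] that t1 by (simp add: algebra_simps)
      then show ?thesis using phige[of \<tau>] that t1 by simp
    qed
    have t1one: "t1 = 1"
    proof (rule ccontr)
      assume "t1 \<noteq> 1"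
      then have t1l: "t1 < 1" using t1 by simp
      obtain g1 where g1: "is_grad f (pt t1) g1" and g1g: "t1 = 0 \<Longrightarrow> g1 = g"
        using der[OF t1(1,2)] g unfolding pt_def by (cases "t1 = 0") auto
      have D1: "(\<phi> has_real_derivative (g1 \<bullet> v)) (at t1)" by (rule phider[OF g1])
      have pos: "fstar < \<phi> \<tau>" if "t1 < \<tau>" "\<tau> \<le> 1" for \<tau>
      proof -
        have "\<tau> \<notin> Z" using that cSup_upper[OF _ Zbd, of \<tau>] unfolding t1_def by force
        then show ?thesis using phige[of \<tau>] that t1 unfolding Z_def by force
      qed
      have gv: "g1 \<bullet> v = 0"
      proof (cases "t1 = 0")
        case True
        have "0 \<le> g1 \<bullet> v"
        proof (rule deriv_ge[OF D1, of "1 - t1" "\<lambda>_. 0"])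
          fix \<tau> :: real assume "0 < \<tau>" "\<tau> \<le> 1 - t1"
          then show "\<tau> * 0 \<le> \<phi> (t1 + \<tau>) - \<phi> t1" using phige[of "t1 + \<tau>"] t1 by simp
        qed (use t1l in auto)
        moreover have "g1 \<bullet> v \<le> 0" using g1g[OF True] smin x unfolding v_def by (simp add: inner_diff_right)
        ultimately show ?thesis by simp
      next
        case False
        show ?thesis
        proof (rule DERIV_local_min[OF D1, of "min t1 (1 - t1)"])
          show "0 < min t1 (1 - t1)" using False t1 t1l by simp
          show "\<forall>y. \<bar>t1 - y\<bar> < min t1 (1 - t1) \<longrightarrow> \<phi> t1 \<le> \<phi> y"
          proof (intro allI impI)
            fix y :: real assume "\<bar>t1 - y\<bar> < min t1 (1 - t1)"
            then have "0 \<le> y" "y \<le> 1" by auto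
            then show "\<phi> t1 \<le> \<phi> y" using phige t1 by simp
          qed
        qed
      qed
      have quad: "\<phi> \<tau> - fstar \<le> L / 2 * ((\<tau> - t1) * d)^2" if "t1 \<le> \<tau>" "\<tau> \<le> 1" for \<tau>
      proof -
        have "?F (pt \<tau>) - ?F (pt t1) - g1 \<bullet> (pt \<tau> - pt t1) \<le> L / 2 * N (pt \<tau> - pt t1) powr 2"
          by (rule smooth_breg[OF C fdiff fsm ptC[OF t1(1,2)] ptC g1]) (use that t1 in auto)
        moreover have "pt \<tau> - pt t1 = (\<tau> - t1) *\<^sub>R v" unfolding pt_def by (simp add: algebra_simps)
        moreover have "N ((\<tau> - t1) *\<^sub>R v) = (\<tau> - t1) * d"
          unfolding d_def using norm_scale[OF norm] that by simp
        ultimately show ?thesis using gv t1 that d0 unfolding \<phi>_def by simp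
      qed
      define \<kappa> where "\<kappa> = \<mu> / 4 * (1 - t1) * d^2"
      define c where "c = L / 2 * d^2"
      have k0: "\<kappa> > 0" unfolding \<kappa>_def using mu t1l d0 by simp
      define B where "B = c + L * \<kappa>^2 / 2"
      have B0: "B > 0" unfolding B_def c_def using L d0 k0 by (intro add_pos_pos) auto
      define \<delta> where "\<delta> = min ((1 - t1) / 2) (\<kappa> / (4 * K * B))"
      have del0: "\<delta> > 0" unfolding \<delta>_def using t1l k0 K B0 by simp
      have del1: "\<delta> \<le> (1 - t1) / 2" unfolding \<delta>_def by (rule min.cobounded1)
      have "\<delta> \<le> \<kappa> / (4 * K * B)" unfolding \<delta>_def by (rule min.cobounded2)
      then have "\<delta> * B \<le> \<kappa> / (4 * K * B) * B" using B0 by (intro mult_right_mono) auto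
      then have del2: "\<delta> * B \<le> \<kappa> / (4 * K)" using B0 by simp
      define \<tau> where "\<tau> = t1 + \<delta>"
      have tau: "0 \<le> \<tau>" "\<tau> \<le> 1" "t1 < \<tau>" unfolding \<tau>_def using del0 del1 t1 by auto
      have "\<delta> * ((1 - t1) / 2) \<le> \<tau> * (1 - \<tau>)"
        using del0 del1 t1 unfolding \<tau>_def by (intro mult_mono) auto
      then have h1: "\<delta> * ((1 - t1) / 2) \<le> \<tau> * (1 - \<tau>)" .
      have pw: "N (s - x) powr 2 = d^2" using d0 unfolding d_def v_def by simp
      have "\<kappa> * \<delta> = (\<mu> / 2 * d^2) * (\<delta> * ((1 - t1) / 2))" unfolding \<kappa>_def by (simp add: field_simps)
      also have "\<dots> \<le> (\<mu> / 2 * d^2) * (\<tau> * (1 - \<tau>))" using h1 mu by (intro mult_left_mono) auto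
      also have "\<dots> = \<mu> / 2 * \<tau> * (1 - \<tau>) * N (s - x) powr 2" unfolding pw by (simp add: algebra_simps)
      finally have "\<kappa> * \<delta> \<le> \<mu> / 2 * \<tau> * (1 - \<tau>) * N (s - x) powr 2" .
      then have lb: "\<kappa> * \<delta> / (2 * K) - L / 2 * (\<kappa> * \<delta>)^2 \<le> \<phi> \<tau> - fstar"
        using local_lb[OF norm f fdiff C Cuc fsm fstar_min K eb x fx x s tau(1,2), of "\<kappa> * \<delta>"]
          pos[OF tau(3,2)] k0 del0 unfolding \<phi>_def pt_def v_def by simp
      have ub: "\<phi> \<tau> - fstar \<le> c * \<delta>^2" using quad[OF less_imp_le[OF tau(3)] tau(2)]
        unfolding c_def \<tau>_def by (simp add: power_mult_distrib mult_ac)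
      have "\<kappa> * \<delta> / (2 * K) \<le> \<delta> * (\<delta> * B)" using lb ub unfolding B_def
        by (simp add: power2_eq_square algebra_simps)
      then have "\<kappa> / (2 * K) \<le> \<delta> * B" using del0 K by (simp add: field_simps)
      with del2 have "\<kappa> / (2 * K) \<le> \<kappa> / (4 * K)" by simp
      then show False using k0 K by (simp add: field_simps)
    qed
    have "\<phi> \<theta> = fstar" using zero[of \<theta>] th t1one by simp
    then show ?thesis using fpt[OF th] unfolding pt_def v_def by simp
  qed
qed


theorem proposition5:
  fixes N :: "real^'n \<Rightarrow> real" and f :: "real^'n \<Rightarrow> ereal" and C :: "(real^'n) set"
    and p q \<mu> L K \<gamma> fstar :: real
  assumes norm: "is_norm N"
    and f: "closed_proper_convex f" and fdiff: "differentiable_on_set f C"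
    and C: "closed C" "convex C"
    and p: "p \<ge> 2" and mu: "\<mu> > 0" and Cuc: "unif_convex_set N C p \<mu>"
    and q: "1 < q" "q \<le> 2" and L: "L > 0" and fsm: "unif_smooth_on N f C q L"
    and fstar_min: "\<forall>x\<in>C. ereal fstar \<le> f x"
    and Xstar_ne: "{x \<in> C. f x = ereal fstar} \<noteq> {}"
    and gamma: "0 \<le> \<gamma>" "\<gamma> \<le> 1" and K: "K > 0"
    and eb: "holder_error_bound N f C fstar \<gamma> K"
  shows "weak_growth f C q (\<gamma> * q / p) (L * (p * K / \<mu>) powr (q / p))"
proof -
  let ?F = "\<lambda>z. real_of_ereal (f z)"
  let ?M = "L * (p * K / \<mu>) powr (q / p)"
  let ?X = "{x \<in> C. f x = ereal fstar}"
  obtain x0 where x0: "x0 \<in> C" "f x0 = ereal fstar" using Xstar_ne by blast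
  have infeq: "(INF y. f y + ind C y) = ereal fstar"
  proof (rule antisym)
    show "(INF y. f y + ind C y) \<le> ereal fstar"
      using x0 by (intro INF_lower2[of x0]) (auto simp: ind_def)
    show "ereal fstar \<le> (INF y. f y + ind C y)"
      using fstar_min by (intro INF_greatest) (auto simp: ind_def)
  qed
  have pp: "p > 0" using p by simp
  have qq: "q > 0" using q by simp
  show ?thesis unfolding weak_growth_def
  proof (intro conjI ballI allI impI)
    show "0 < ?M" using L K mu pp by simp
    fix x g s :: "real^'n" and \<theta> :: real
    assume x: "x \<in> C" and g: "is_grad f x g" and s: "s \<in> C \<and> (\<forall>y\<in>C. g \<bullet> s \<le> g \<bullet> y)"
      and th: "\<theta> \<in> {0..1}"
    from s have sC: "s \<in> C" and smin: "\<forall>y\<in>C. g \<bullet> s \<le> g \<bullet> y" by auto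
    from th have th0: "0 \<le> \<theta>" and th1: "\<theta> \<le> 1" by auto
    define y where "y = x + \<theta> *\<^sub>R (s - x)"
    have yC: "y \<in> C" unfolding y_def
      using convexD_alt[OF C(2) x sC, of \<theta>] th0 th1 by (simp add: algebra_simps)
    obtain ax where ax: "f x = ereal ax" using finC[OF fdiff x] by blast
    obtain ay where ay: "f y = ereal ay" using finC[OF fdiff yC] by blast
    define a where "a = ax - fstar"
    define G where "G = g \<bullet> (x - s)"
    define d where "d = N (s - x)"
    define Dr where "Dr = ay - ax - g \<bullet> (\<theta> *\<^sub>R (s - x))"
    have d0: "d \<ge> 0" unfolding d_def using norm_nonneg'[OF norm] .
    have a0: "a \<ge> 0" using fstar_min x ax unfolding a_def by auto
    have G0: "G \<ge> 0" using smin x unfolding G_def by (simp add: inner_diff_right)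
    have sub: "subopt f C x = ereal a"
      unfolding subopt_def infeq using x ax by (simp add: ind_def a_def)
    have gyx: "g \<bullet> (y - x) = \<theta> * (g \<bullet> (s - x))" by (simp add: y_def)
    have Dfun: "Dfun f C g x s \<theta> = ereal Dr"
      unfolding Dfun_def bregman_def Dr_def using x sC yC ax ay
      by (simp add: ind_def y_def[symmetric] gyx)
    have gapge: "ereal G \<le> gap f C x g"
    proof -
      have e1: "ereal (g \<bullet> x - ax) \<le> econj f g"
        unfolding econj_def using ax by (intro SUP_upper2[of x]) auto
      have e2: "ereal (- (g \<bullet> s)) \<le> econj (ind C) (- g)"
        unfolding econj_def using sC by (intro SUP_upper2[of s]) (auto simp: ind_def)
      have "ereal ax + 0 + ereal (g \<bullet> x - ax) + ereal (- (g \<bullet> s)) \<le> f x + ind C x + econj f g + econj (ind C) (- g)"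
        using ax x e1 e2 by (intro add_mono) (auto simp: ind_def)
      then show ?thesis unfolding gap_def G_def by (simp add: inner_diff_right)
    qed
    have Drle: "Dr \<le> L / q * (\<theta> * d) powr q"
    proof -
      have "?F y - ?F x - g \<bullet> (y - x) \<le> L / q * N (y - x) powr q"
        by (rule smooth_breg[OF C(2) fdiff fsm x yC g])
      moreover have "N (y - x) = \<theta> * d"
        unfolding y_def d_def using norm_scale[OF norm] th0 by simp
      moreover have "y - x = \<theta> *\<^sub>R (s - x)" by (simp add: y_def)
      ultimately show ?thesis unfolding Dr_def using ax ay by simp
    qed
    define r where "r = \<gamma> * q / p"
    have r1: "r \<le> 1"
    proof -
      have "\<gamma> * q \<le> 1 * p" using gamma q p by (intro mult_mono) auto
      then show ?thesis unfolding r_def using pp by simp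
    qed
    have coef: "0 \<le> ?M * \<theta> powr q / q" using L qq by simp
    have key: "Dr * rpow a (1 - r) \<le> ?M * \<theta> powr q / q * G"
    proof (cases "a > 0")
      case True
      have aG: "a \<le> G"
      proof -
        have "?F x + g \<bullet> (x0 - x) \<le> ?F x0" by (rule grad_ineqC[OF f g fdiff x0(1)])
        moreover have "g \<bullet> s \<le> g \<bullet> x0" using smin x0 by blast
        ultimately show ?thesis unfolding a_def G_def using ax x0 by (simp add: inner_diff_right)
      qed
      define c where "c = \<mu> / p * d powr p"
      have c0: "c \<ge> 0" unfolding c_def using mu pp by simp
      have each: "c * a \<le> G * N (x - v)" if v: "v \<in> C" "f v = ereal fstar" for v
      proof (cases "v = x")
        case True then show ?thesis using v ax True \<open>a > 0\<close> unfolding a_def by simp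
      next
        case False
        define e where "e = N (x - v)"
        have e: "e > 0" unfolding e_def using norm_zero'[OF norm, of "x - v"] norm_nonneg'[OF norm, of "x - v"] False by simp
        define w where "w = (1 / e) *\<^sub>R (v - x)"
        have "N w = 1 / e * N (v - x)" unfolding w_def using norm_scale[OF norm] e by simp
        also have "N (v - x) = e" unfolding e_def using norm_neg[OF norm, of "x - v"] by simp
        finally have Nw: "N w \<le> 1" using e by simp
        have "c * (- (g \<bullet> w)) \<le> G"
          using unifconv_bound[OF Cuc x sC smin Nw] unfolding c_def G_def d_def .
        moreover have "- (g \<bullet> w) = g \<bullet> (x - v) / e" unfolding w_def
          by (simp add: inner_diff_right diff_divide_distrib)
        moreover have "a \<le> g \<bullet> (x - v)"
          using grad_ineqC[OF f g fdiff v(1)] v ax unfolding a_def by (simp add: inner_diff_right)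
        ultimately have "c * (a / e) \<le> G"
          using c0 e by (smt (verit) divide_right_mono mult_left_mono)
        then show ?thesis using e unfolding e_def[symmetric] by (simp add: field_simps)
      qed
      define S where "S = {N (x - v) | v. v \<in> C \<and> f v = ereal fstar}"
      have Sne: "S \<noteq> {}" unfolding S_def using x0 by blast
      have cS: "c * a \<le> G * Inf S"
      proof -
        have G: "G > 0" using aG \<open>a > 0\<close> by simp
        have "c * a / G \<le> Inf S"
          using Sne by (rule cInf_greatest) (use each G in \<open>auto simp: S_def field_simps\<close>)
        then show ?thesis using G by (simp add: field_simps)
      qed
      have "Inf S \<le> K * rpow (?F x - fstar) \<gamma>" using eb x unfolding holder_error_bound_def S_def by blast
      moreover have "?F x = ax" using ax by simp
      ultimately have "Inf S \<le> K * a powr \<gamma>" using \<open>a > 0\<close> unfolding a_def rpow_def by (auto split: if_splits)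
      then have H: "\<mu> / p * d powr p * a \<le> G * (K * a powr \<gamma>)"
        using cS G0 unfolding c_def by (smt (verit) mult_left_mono)
      have "Dr * a powr (1 - \<gamma> * q / p) \<le> ?M * \<theta> powr q / q * G"
        by (rule core[OF True aG d0 p q gamma mu K L H th0 Drle])
      then show ?thesis using True unfolding rpow_def r_def by auto
    next
      case False
      then have a: "a = 0" using a0 by simp
      show ?thesis
      proof (cases "r = 1")
        case False
        then have "rpow a (1 - r) = 0" using a r1 unfolding rpow_def by simp
        then show ?thesis using mult_nonneg_nonneg[OF coef G0] by simp
      next
        case True
        have gq: "\<gamma> * q = p" using True pp unfolding r_def by simp
        have l1: "\<gamma> * q \<le> \<gamma> * 2" using gamma q by (intro mult_left_mono) auto
        have l2: "\<gamma> * 2 \<le> 2" using gamma by simp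
        have p2: "p = 2" using gq l1 l2 p by linarith
        have ga: "\<gamma> = 1" using gq l1 l2 p2 by linarith
        have q2: "q = 2" using gq ga p2 by simp
        have fx: "f x = ereal fstar" using ax a unfolding a_def by simp
        have fy: "ay = fstar"
          using edge[OF norm f fdiff C(2) mu Cuc[unfolded p2] L fsm[unfolded q2] fstar_min K
             eb[unfolded ga] x fx g sC smin th0 th1] ay unfolding y_def by simp
        have D0: "((\<lambda>\<tau>. ?F (x + \<tau> *\<^sub>R (s - x))) has_real_derivative g \<bullet> (s - x)) (at 0)"
          using line_deriv[of f x 0 "s - x" g] g by simp
        have "0 \<le> g \<bullet> (s - x)"
        proof (rule deriv_ge[OF D0 zero_less_one, of "\<lambda>_. 0"])
          fix \<tau> :: real assume t: "0 < \<tau>" "\<tau> \<le> 1"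
          have inC: "x + \<tau> *\<^sub>R (s - x) \<in> C"
            using convexD_alt[OF C(2) x sC, of \<tau>] t by (simp add: algebra_simps)
          have "ereal fstar \<le> f (x + \<tau> *\<^sub>R (s - x))" using fstar_min inC by blast
          then have "fstar \<le> ?F (x + \<tau> *\<^sub>R (s - x))"
            using finC[OF fdiff inC] by (metis ereal_less_eq(3))
          then show "\<tau> * 0 \<le> ?F (x + (0 + \<tau>) *\<^sub>R (s - x)) - ?F (x + 0 *\<^sub>R (s - x))"
            using fx by simp
        qed simp
        then have "Dr \<le> 0" unfolding Dr_def using fy fx ax th0 by simp
        moreover have "rpow a (1 - r) = 1" using True unfolding rpow_def by simp
        ultimately show ?thesis using mult_nonneg_nonneg[OF coef G0] by simp
      qed
    qed
    show "Dfun f C g x s \<theta> * ereal (rpow (real_of_ereal (subopt f C x)) (1 - \<gamma> * q / p))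
          \<le> ereal (?M * \<theta> powr q / q) * gap f C x g"
    proof -
      have "Dfun f C g x s \<theta> * ereal (rpow (real_of_ereal (subopt f C x)) (1 - \<gamma> * q / p))
          = ereal (Dr * rpow a (1 - r))" unfolding Dfun sub r_def by simp
      also have "\<dots> \<le> ereal (?M * \<theta> powr q / q * G)" using key by simp
      also have "\<dots> = ereal (?M * \<theta> powr q / q) * ereal G" by simp
      also have "\<dots> \<le> ereal (?M * \<theta> powr q / q) * gap f C x g"
        using gapge coef by (intro ereal_mult_left_mono) auto
      finally show ?thesis .
    qed
  qed
qed


end
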